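(* Let $\alpha\in(1,2)$ and let $p\ge3$ be an odd integer. Then $$f^{p,0}(\theta)\le f^{p,\alpha}(\theta)\le f^{p,2}(\theta)\qquad\text{for all }\theta\text{ with }|\theta|\in[1,\pi].$$
   Context: For real $\beta\ge0$ and integer $p\ge 2$, $f^{p,\beta}(\theta)=\sum_{l\in\mathbb Z}|\theta+2l\pi|^{\beta}\left(\frac{\sin(\theta/2+l\pi)}{\theta/2+l\pi}\right)^{p+1}$ (with $\frac{\sin x}{x}:=1$ at $x=0$ and $|x|^0:=1$); in particular $f^{p,0}$ and $f^{p,2}$ are given by this formula with $\beta=0$ and $\beta=2$. *)

theory Defs
  imports "HOL-Analysis.Analysis"
begin

definition sinc :: "real \<Rightarrow> real" where
  "sinc x = (if x = 0 then 1 else sin x / x)"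

definition abs_pow :: "real \<Rightarrow> real \<Rightarrow> real" where
  "abs_pow x \<beta> = (if \<beta> = 0 then 1 else \<bar>x\<bar> powr \<beta>)"

definition f_pb :: "nat \<Rightarrow> real \<Rightarrow> real \<Rightarrow> real" where
  "f_pb p \<beta> \<theta> = (\<Sum>\<^sub>\<infinity>l\<in>(UNIV::int set).
      abs_pow (\<theta> + 2 * of_int l * pi) \<beta> * (sinc (\<theta> / 2 + of_int l * pi)) ^ (p + 1))"

end

theory Submission
  imports Defs
begin

lemma summ_nat: "summable (\<lambda>n::nat. 1 / (1 + real n ^ 2))"
proof (rule summable_comparison_test[where g="\<lambda>n. 2 * inverse (real (Suc n) ^ 2)"])
  have "summable (\<lambda>n::nat. inverse (real (Suc n) ^ 2))"
    using inverse_power_summable[of 2, where 'a=real] by (subst summable_Suc_iff) simp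
  then show "summable (\<lambda>n. 2 * inverse (real (Suc n) ^ 2))" by (rule summable_mult)
  show "\<exists>N. \<forall>n\<ge>N. norm (1 / (1 + real n ^ 2)) \<le> 2 * inverse (real (Suc n) ^ 2)"
  proof (intro exI allI impI)
    fix n :: nat
    have z: "0 \<le> (real n - 1)^2" by simp
    have a: "(real n + 1)^2 \<le> 2 * (1 + real n ^ 2)" using z
      by (simp add: power2_eq_square algebra_simps)
    have p1: "0 < (real n + 1)^2" by simp
    have p2: "0 < 2 * (1 + real n ^ 2)" by (simp add: add_pos_nonneg)
    have p3: "0 < 2 * (1 + real n ^ 2) * (real n + 1)^2" by (rule mult_pos_pos[OF p2 p1])
    have "1 / (1 + real n ^ 2) = 2 / (2 * (1 + real n ^ 2))" by (simp add: divide_simps)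
    also have "\<dots> \<le> 2 / (real n + 1)^2"
      by (rule divide_left_mono[OF a]) (use p3 in auto)
    finally have "1 / (1 + real n ^ 2) \<le> 2 / (real n + 1)^2" .
    then show "norm (1 / (1 + real n ^ 2)) \<le> 2 * inverse (real (Suc n) ^ 2)"
      by (simp add: inverse_eq_divide add.commute)
  qed
qed

lemma summ_int: "(\<lambda>l::int. 1 / (1 + real_of_int l ^ 2)) summable_on UNIV"
proof -
  let ?g = "\<lambda>l::int. 1 / (1 + real_of_int l ^ 2)"
  have A: "?g summable_on (int ` UNIV)"
    by (subst summable_on_reindex) (auto simp: o_def summable_on_UNIV_nonneg_real_iff summ_nat)
  have B: "?g summable_on ((\<lambda>n. - int n) ` UNIV)"
    by (subst summable_on_reindex) (auto simp: inj_def o_def summable_on_UNIV_nonneg_real_iff summ_nat)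
  have U: "int ` UNIV \<union> (\<lambda>n. - int n) ` UNIV = (UNIV :: int set)"
  proof (intro set_eqI iffI)
    fix l :: int
    show "l \<in> int ` UNIV \<union> (\<lambda>n. - int n) ` UNIV"
    proof (cases "l \<ge> 0")
      case True
      then have "l = int (nat l)" by simp
      then show ?thesis by blast
    next
      case False
      then have "l = - int (nat (- l))" by simp
      then show ?thesis by blast
    qed
  qed auto
  show ?thesis using summable_on_union[OF A B] U by simp
qed

lemma sinc_le1: "\<bar>sinc y\<bar> \<le> 1"
proof (cases "y = 0")
  case False
  then have "\<bar>sinc y\<bar> = \<bar>sin y\<bar> / \<bar>y\<bar>" unfolding sinc_def by (simp add: abs_divide)
  also have "\<dots> \<le> 1" using abs_sin_x_le_abs_x[of y] False by simp
  finally show ?thesis .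
qed (simp add: sinc_def)

lemma sinc_bound: "x \<noteq> 0 \<Longrightarrow> \<bar>sinc (x / 2)\<bar> \<le> 2 / \<bar>x\<bar>"
proof -
  assume xne: "x \<noteq> 0"
  have "sinc (x/2) = 2 * sin (x / 2) / x" using xne unfolding sinc_def by simp
  then have "\<bar>sinc (x/2)\<bar> = 2 * \<bar>sin (x / 2)\<bar> / \<bar>x\<bar>" by (simp add: abs_divide abs_mult)
  also have "\<dots> \<le> 2 * 1 / \<bar>x\<bar>"
    by (rule divide_right_mono) (auto simp: abs_sin_le_one)
  finally show ?thesis by simp
qed

theorem proposition5p4:
  fixes \<alpha> \<theta> :: real and p :: nat
  assumes "1 < \<alpha>" and "\<alpha> < 2"
    and "p \<ge> 3" and "odd p"
    and "1 \<le> \<bar>\<theta>\<bar>" and "\<bar>\<theta>\<bar> \<le> pi"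
  shows "f_pb p 0 \<theta> \<le> f_pb p \<alpha> \<theta> \<and> f_pb p \<alpha> \<theta> \<le> f_pb p 2 \<theta>"
proof -
  define x where "x l = \<theta> + 2 * of_int l * pi" for l :: int
  define T where "T \<beta> l = abs_pow (x l) \<beta> * (sinc (\<theta> / 2 + of_int l * pi)) ^ (p + 1)" for \<beta> l
  have fT: "f_pb p \<beta> \<theta> = infsum (T \<beta>) UNIV" for \<beta>
    unfolding f_pb_def T_def x_def by simp
  have sx: "\<theta> / 2 + of_int l * pi = x l / 2" for l unfolding x_def by simp
  have hx: "1 \<le> \<bar>x l\<bar> \<and> \<bar>real_of_int l\<bar> \<le> \<bar>x l\<bar>" for l
  proof (cases "l = 0")
    case True
    then show ?thesis using assms(5) unfolding x_def by simp
  next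
    case False
    have e1: "\<bar>2 * real_of_int l * pi\<bar> = 2 * \<bar>real_of_int l\<bar> * pi" by (simp add: abs_mult)
    have e2: "\<bar>x l - \<theta>\<bar> \<le> \<bar>x l\<bar> + \<bar>\<theta>\<bar>" by (rule abs_triangle_ineq4)
    have e3: "x l - \<theta> = 2 * real_of_int l * pi" unfolding x_def by simp
    have l1: "\<bar>real_of_int l\<bar> \<ge> 1" using False by simp
    have e4: "0 \<le> (\<bar>real_of_int l\<bar> - 1) * pi" using l1 by simp
    have e5: "\<bar>real_of_int l\<bar> * 1 \<le> \<bar>real_of_int l\<bar> * pi"
      by (rule mult_left_mono) (use pi_ge_two in auto)
    have e6: "2 * \<bar>real_of_int l\<bar> * pi = \<bar>real_of_int l\<bar> * pi + (\<bar>real_of_int l\<bar> - 1) * pi + pi"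
      by (simp add: algebra_simps)
    show ?thesis using e1 e2 e3 e4 e5 e6 l1 assms(6) by linarith
  qed
  have x1: "\<bar>x l\<bar> \<ge> 1" for l using hx by blast
  have xsq: "x l ^ 2 \<ge> (1 + real_of_int l ^ 2) / 2" for l
  proof -
    have a: "1 * 1 \<le> \<bar>x l\<bar> * \<bar>x l\<bar>" using hx[of l] by (intro mult_mono) auto
    have b: "\<bar>real_of_int l\<bar> * \<bar>real_of_int l\<bar> \<le> \<bar>x l\<bar> * \<bar>x l\<bar>" using hx[of l] by (intro mult_mono) auto
    have c: "x l ^ 2 = \<bar>x l\<bar> * \<bar>x l\<bar>" by (simp add: power2_eq_square)
    have d: "real_of_int l ^ 2 = \<bar>real_of_int l\<bar> * \<bar>real_of_int l\<bar>" by (simp add: power2_eq_square)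
    show ?thesis unfolding c d using a b by simp
  qed
  have sq_nonneg: "0 \<le> (sinc y) ^ (p + 1)" for y
    by (rule zero_le_even_power) (use assms(4) in simp)
  have T_nonneg: "0 \<le> T \<beta> l" for \<beta> l
    unfolding T_def abs_pow_def using sq_nonneg by auto
  have T01: "T 0 l \<le> T \<alpha> l" for l
  proof -
    let ?s = "(sinc (\<theta> / 2 + of_int l * pi)) ^ (p + 1)"
    have "1 \<le> \<bar>x l\<bar> powr \<alpha>" using x1 assms(1) by (intro ge_one_powr_ge_zero) auto
    then have "1 * ?s \<le> \<bar>x l\<bar> powr \<alpha> * ?s" by (rule mult_right_mono[OF _ sq_nonneg])
    moreover have "T 0 l = 1 * ?s" unfolding T_def abs_pow_def by simp
    moreover have "T \<alpha> l = \<bar>x l\<bar> powr \<alpha> * ?s" unfolding T_def abs_pow_def using assms(1) by simp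
    ultimately show ?thesis by simp
  qed
  have T12: "T \<alpha> l \<le> T 2 l" for l
  proof -
    let ?s = "(sinc (\<theta> / 2 + of_int l * pi)) ^ (p + 1)"
    have "\<bar>x l\<bar> powr \<alpha> \<le> \<bar>x l\<bar> powr 2" using x1 assms(2) by (intro powr_mono) auto
    then have "\<bar>x l\<bar> powr \<alpha> * ?s \<le> \<bar>x l\<bar> powr 2 * ?s" by (rule mult_right_mono[OF _ sq_nonneg])
    moreover have "T 2 l = \<bar>x l\<bar> powr 2 * ?s" unfolding T_def abs_pow_def by simp
    moreover have "T \<alpha> l = \<bar>x l\<bar> powr \<alpha> * ?s" unfolding T_def abs_pow_def using assms(1) by simp
    ultimately show ?thesis by simp
  qed
  have T2b: "T 2 l \<le> 32 * (1 / (1 + real_of_int l ^ 2))" for l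
  proof -
    let ?s = "sinc (x l / 2)"
    have xne: "x l \<noteq> 0" using x1[of l] by auto
    have sabs: "\<bar>?s\<bar> \<le> 2 / \<bar>x l\<bar>" using sinc_bound[OF xne] .
    have s1: "\<bar>?s\<bar> \<le> 1" by (rule sinc_le1)
    have "?s ^ (p + 1) = \<bar>?s\<bar> ^ (p + 1)" by (rule power_even_abs[symmetric]) (use assms(4) in simp)
    also have "\<dots> \<le> \<bar>?s\<bar> ^ 4" using s1 assms(3) by (intro power_decreasing) auto
    also have "\<dots> \<le> (2 / \<bar>x l\<bar>) ^ 4" using sabs by (intro power_mono) auto
    also have "\<dots> = 16 / (x l ^ 2 * x l ^ 2)"
      by (simp add: power_divide power2_eq_square eval_nat_numeral abs_mult_self)
    finally have h: "?s ^ (p + 1) \<le> 16 / (x l ^ 2 * x l ^ 2)" .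
    have "abs_pow (x l) 2 = x l ^ 2" unfolding abs_pow_def using xne
      by (simp add: powr_realpow)
    then have "T 2 l = x l ^ 2 * ?s ^ (p + 1)" unfolding T_def sx by simp
    also have "\<dots> \<le> x l ^ 2 * (16 / (x l ^ 2 * x l ^ 2))" using h by (intro mult_left_mono) auto
    also have "\<dots> = 16 / x l ^ 2" using xne by (simp add: field_simps power2_eq_square eval_nat_numeral)
    also have "\<dots> \<le> 16 / ((1 + real_of_int l ^ 2) / 2)"
      using xsq[of l] xne by (intro divide_left_mono) (auto intro!: mult_pos_pos add_pos_nonneg)
    also have "\<dots> = 32 * (1 / (1 + real_of_int l ^ 2))" by simp
    finally show ?thesis .
  qed
  have S2: "T 2 summable_on UNIV"
    by (rule summable_on_comparison_test[OF summable_on_cmult_right[OF summ_int]])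
       (use T2b T_nonneg in auto)
  have Sa: "T \<alpha> summable_on UNIV"
    by (rule summable_on_comparison_test[OF S2]) (use T12 T_nonneg in auto)
  have S0: "T 0 summable_on UNIV"
    by (rule summable_on_comparison_test[OF Sa]) (use T01 T_nonneg in auto)
  show ?thesis unfolding fT
    using infsum_mono[OF S0 Sa T01] infsum_mono[OF Sa S2 T12] by auto
qed

end
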